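(* Let $0\le q\in L_1^{loc}(\mathbb{R})$ and assume there is $a\in(0,\infty)$ with $\inf_{x\in\mathbb{R}}\int_{x-a}^{x+a}q(t)\,dt>0$. Let $\lambda\in(0,\infty)$, $p\in[1,\infty]$, and let $(L+\lambda E)^{-1}$ be the operator on $L_p(\mathbb{R})$ given by $$\big((L+\lambda E)^{-1}f\big)(x)=\int_x^\infty e^{-\int_x^t(q(\xi)+\lambda)d\xi}f(t)\,dt,\quad x\in\mathbb{R}.$$ Then there is $\delta(\lambda)>0$ such that $\|(L+\lambda E)^{-1}\|_{L_p\to L_p}\le\frac{1}{\lambda+\delta(\lambda)}$.
   Context: $L_\infty(\mathbb{R})$ denotes $C(\mathbb{R})$, bounded continuous functions with the sup norm. $E$ is the identity operator and $L=-\frac{d}{dx}+q(x)$. *)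

theory Defs
  imports "HOL-Analysis.Analysis"
begin

definition in_Lp :: "real \<Rightarrow> (real \<Rightarrow> real) \<Rightarrow> bool" where
  "in_Lp p f \<longleftrightarrow> f \<in> borel_measurable lborel \<and> integrable lborel (\<lambda>x. \<bar>f x\<bar> powr p)"

definition Lp_norm :: "real \<Rightarrow> (real \<Rightarrow> real) \<Rightarrow> real" where
  "Lp_norm p f = (\<integral>x. \<bar>f x\<bar> powr p \<partial>lborel) powr (1 / p)"

text \<open>The space denoted L_infinity in the paper: bounded continuous functions, sup norm.\<close>
definition in_Cb :: "(real \<Rightarrow> real) \<Rightarrow> bool" where
  "in_Cb f \<longleftrightarrow> continuous_on UNIV f \<and> bounded (range f)"

definition sup_norm :: "(real \<Rightarrow> real) \<Rightarrow> real" where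
  "sup_norm f = (SUP x. \<bar>f x\<bar>)"

definition resolv :: "(real \<Rightarrow> real) \<Rightarrow> real \<Rightarrow> (real \<Rightarrow> real) \<Rightarrow> real \<Rightarrow> real" where
  "resolv q lam f x =
     (LINT t:{x..}|lborel. exp (- (LINT \<xi>:{x..t}|lborel. q \<xi> + lam)) * f t)"

end

theory Submission
  imports Defs
begin

lemma cont_Ici:
  fixes g :: "real \<Rightarrow> real"
  assumes g: "integrable lborel g"
  shows "isCont (\<lambda>x. \<integral>t. indicator {x..} t * g t \<partial>lborel) x0"
proof (rule continuous_at_sequentiallyI)
  fix u :: "nat \<Rightarrow> real" assume u: "u \<longlonglongrightarrow> x0"
  have gm[measurable]: "g \<in> borel_measurable lborel" using g by auto
  show "(\<lambda>n. \<integral>t. indicator {u n..} t * g t \<partial>lborel) \<longlonglongrightarrow> (\<integral>t. indicator {x0..} t * g t \<partial>lborel)"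
  proof (rule integral_dominated_convergence[where w="\<lambda>t. \<bar>g t\<bar>"])
    show "AE t in lborel. (\<lambda>n. indicator {u n..} t * g t) \<longlonglongrightarrow> indicator {x0..} t * g t"
      using AE_lborel_singleton[of x0]
    proof eventually_elim
      case (elim t)
      show ?case
      proof (cases "t < x0")
        case True
        have "eventually (\<lambda>n. u n > t) sequentially" using order_tendstoD(1)[OF u True] .
        then have "eventually (\<lambda>n. indicator {u n..} t * g t = indicator {x0..} t * g t) sequentially"
          by eventually_elim (use True in auto)
        then show ?thesis by (rule tendsto_eventually[OF eventually_mono]) auto
      next
        case False
        then have "t > x0" using elim by auto
        have "eventually (\<lambda>n. u n < t) sequentially" using order_tendstoD(2)[OF u \<open>t > x0\<close>] .
        then have "eventually (\<lambda>n. indicator {u n..} t * g t = indicator {x0..} t * g t) sequentially"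
          by eventually_elim (use \<open>t > x0\<close> in auto)
        then show ?thesis by (rule tendsto_eventually[OF eventually_mono]) auto
      qed
    qed
  qed (use g in \<open>auto simp: indicator_def\<close>)
qed

lemma cont_Iic:
  fixes g :: "real \<Rightarrow> real"
  assumes g: "integrable lborel g"
  shows "isCont (\<lambda>x. \<integral>t. indicator {..x} t * g t \<partial>lborel) x0"
proof (rule continuous_at_sequentiallyI)
  fix u :: "nat \<Rightarrow> real" assume u: "u \<longlonglongrightarrow> x0"
  have gm[measurable]: "g \<in> borel_measurable lborel" using g by auto
  show "(\<lambda>n. \<integral>t. indicator {..u n} t * g t \<partial>lborel) \<longlonglongrightarrow> (\<integral>t. indicator {..x0} t * g t \<partial>lborel)"
  proof (rule integral_dominated_convergence[where w="\<lambda>t. \<bar>g t\<bar>"])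
    show "AE t in lborel. (\<lambda>n. indicator {..u n} t * g t) \<longlonglongrightarrow> indicator {..x0} t * g t"
      using AE_lborel_singleton[of x0]
    proof eventually_elim
      case (elim t)
      show ?case
      proof (cases "t < x0")
        case True
        have "eventually (\<lambda>n. u n > t) sequentially" using order_tendstoD(1)[OF u True] .
        then have "eventually (\<lambda>n. indicator {..u n} t * g t = indicator {..x0} t * g t) sequentially"
          by eventually_elim (use True in auto)
        then show ?thesis by (rule tendsto_eventually[OF eventually_mono]) auto
      next
        case False
        then have "t > x0" using elim by auto
        have "eventually (\<lambda>n. u n < t) sequentially" using order_tendstoD(2)[OF u \<open>t > x0\<close>] .
        then have "eventually (\<lambda>n. indicator {..u n} t * g t = indicator {..x0} t * g t) sequentially"
          by eventually_elim (use \<open>t > x0\<close> in auto)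
        then show ?thesis by (rule tendsto_eventually[OF eventually_mono]) auto
      qed
    qed
  qed (use g in \<open>auto simp: indicator_def\<close>)
qed

lemma exp_Ioi:
  fixes lam b :: real assumes lam: "lam > 0"
  shows "set_integrable lborel {b<..} (\<lambda>s. exp (- (lam * s)))"
    and "(LINT s:{b<..}|lborel. exp (- (lam * s))) = exp (- (lam * b)) / lam"
proof -
  let ?F = "\<lambda>u. - exp (- (lam * u)) / lam"
  have D: "\<And>t. (?F has_real_derivative exp (- (lam * t))) (at t)"
    using lam by (auto intro!: derivative_eq_intros)
  have A: "((?F \<circ> real_of_ereal) \<longlongrightarrow> ?F b) (at_right (ereal b))"
    using lam by (auto simp: ereal_tendsto_simps intro!: tendsto_eq_intros)
  have *: "((\<lambda>t. exp (- (lam * t))) \<longlongrightarrow> 0) at_top"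
    using lam
    by (auto intro!: exp_at_bot[THEN filterlim_compose] filterlim_tendsto_pos_mult_at_top filterlim_ident
             simp: filterlim_uminus_at_bot)
  have B: "((?F \<circ> real_of_ereal) \<longlongrightarrow> 0) (at_left \<infinity>)"
    unfolding ereal_tendsto_simps
    using tendsto_divide[OF tendsto_minus[OF *] tendsto_const[of lam]] lam by simp
  note R = interval_integral_FTC_nonneg[where a="ereal b" and b=\<infinity>, OF _ D _ _ A B]
  show "set_integrable lborel {b<..} (\<lambda>s. exp (- (lam * s)))"
    using R(1) by simp
  have "(LBINT x=ereal b..\<infinity>. exp (- (lam * x))) = 0 - ?F b" using R(2) by simp
  then show "(LINT s:{b<..}|lborel. exp (- (lam * s))) = exp (- (lam * b)) / lam"
    by (simp add: interval_integral_Ioi)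
qed

lemma exp_Ici:
  fixes lam b :: real assumes lam: "lam > 0"
  shows "integrable lborel (\<lambda>s. indicator {b..} s * exp (- (lam * s)))"
    and "(\<integral>s. indicator {b..} s * exp (- (lam * s)) \<partial>lborel) = exp (- (lam * b)) / lam"
proof -
  have ae: "AE s in lborel. indicator {b<..} s * exp (- (lam * s)) = indicator {b..} s * exp (- (lam * s))"
    using AE_lborel_singleton[of b] by eventually_elim (auto simp: indicator_def)
  show "integrable lborel (\<lambda>s. indicator {b..} s * exp (- (lam * s)))"
    by (rule integrable_cong_AE_imp[OF exp_Ioi(1)[OF lam, of b, unfolded set_integrable_def]]) (use ae in auto)
  show "(\<integral>s. indicator {b..} s * exp (- (lam * s)) \<partial>lborel) = exp (- (lam * b)) / lam"
    using exp_Ioi(2)[OF lam, of b] integral_cong_AE[OF _ _ ae]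
    by (simp add: set_lebesgue_integral_def)
qed

lemma powr_pred_mult:
  fixes m p :: real assumes m: "m > 0"
  shows "m powr (p - 1) * m = m powr p"
proof -
  have "m powr p = m powr ((p - 1) + 1)" by simp
  also have "\<dots> = m powr (p - 1) * m powr 1" by (rule powr_add)
  also have "m powr 1 = m" using m by simp
  finally show ?thesis by simp
qed

lemma tangent_powr:
  fixes y m p :: real assumes y: "y \<ge> 0" and m: "m > 0" and p: "p \<ge> 1"
  shows "y powr p \<ge> m powr p + p * m powr (p - 1) * (y - m)"
proof (cases "y = 0")
  case True
  have e: "p * m powr (p - 1) * (y - m) = - (p * (m powr (p - 1) * m))"
    using True by (simp add: algebra_simps)
  have "m powr p + p * m powr (p - 1) * (y - m) = m powr p - p * m powr p"
    unfolding e powr_pred_mult[OF m] by simp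
  also have "\<dots> = (1 - p) * m powr p" by (simp add: algebra_simps)
  also have "\<dots> \<le> 0" using p by (intro mult_nonpos_nonneg) auto
  also have "0 \<le> y powr p" by simp
  finally show ?thesis .
next
  case False
  then have "y > 0" using y by simp
  have "p * m powr (p - 1) * (y - m) \<le> y powr p - m powr p"
  proof (rule convex_on_imp_above_tangent[where A = "{0<..}"])
    show "convex_on {0<..} (\<lambda>x::real. x powr p)" using powr_convex[OF p] .
    show "((\<lambda>x. x powr p) has_field_derivative p * m powr (p - 1)) (at m within {0<..})"
      by (rule has_field_derivative_at_within[OF has_real_derivative_powr[OF m]])
    show "connected {0::real<..}" by simp
    show "m \<in> interior {0<..}" using m by (simp add: interior_open)
    show "y \<in> {0<..}" using \<open>y > 0\<close> by simp
  qed
  then show ?thesis by simp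
qed

lemma jensen_pw:
  fixes k g :: "real \<Rightarrow> real" and M p :: real
  assumes k0: "\<And>t. k t \<ge> 0" and g0: "\<And>t. g t \<ge> 0"
    and ik: "integrable lborel k" and ikg: "integrable lborel (\<lambda>t. k t * g t)"
    and ikgp: "integrable lborel (\<lambda>t. k t * g t powr p)"
    and W: "(\<integral>t. k t \<partial>lborel) \<le> M" and M: "M > 0" and p: "p \<ge> 1"
  shows "(\<integral>t. k t * g t \<partial>lborel) powr p \<le> M powr (p - 1) * (\<integral>t. k t * g t powr p \<partial>lborel)"
proof -
  define A where "A = (\<integral>t. k t * g t \<partial>lborel)"
  define W where "W = (\<integral>t. k t \<partial>lborel)"
  have A0: "A \<ge> 0" unfolding A_def using k0 g0 by (intro Bochner_Integration.integral_nonneg) auto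
  have W0: "W \<ge> 0" unfolding W_def using k0 by (intro Bochner_Integration.integral_nonneg) auto
  have I0: "(\<integral>t. k t * g t powr p \<partial>lborel) \<ge> 0" using k0 by (intro Bochner_Integration.integral_nonneg) auto
  show ?thesis
  proof (cases "A = 0")
    case True
    then show ?thesis unfolding A_def[symmetric] using I0 by simp
  next
    case False
    then have Apos: "A > 0" using A0 by simp
    define m where "m = A / M"
    have m: "m > 0" unfolding m_def using Apos M by simp
    have pt: "k t * (m powr p + p * m powr (p - 1) * (g t - m)) \<le> k t * g t powr p" for t
      using tangent_powr[OF g0 m p, of t] k0[of t] by (intro mult_left_mono) auto
    have eqf: "(\<lambda>t. k t * (m powr p + p * m powr (p - 1) * (g t - m)))
          = (\<lambda>t. (m powr p - p * m powr (p - 1) * m) * k t + (p * m powr (p - 1)) * (k t * g t))"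
      by (rule ext) (simp add: algebra_simps)
    have intl: "integrable lborel (\<lambda>t. k t * (m powr p + p * m powr (p - 1) * (g t - m)))"
      unfolding eqf using ik ikg by simp
    have "(\<integral>t. k t * (m powr p + p * m powr (p - 1) * (g t - m)) \<partial>lborel) \<le> (\<integral>t. k t * g t powr p \<partial>lborel)"
      using pt intl ikgp by (intro integral_mono) auto
    moreover have "(\<integral>t. k t * (m powr p + p * m powr (p - 1) * (g t - m)) \<partial>lborel)
        = (m powr p - p * m powr (p - 1) * m) * W + p * m powr (p - 1) * A"
      unfolding eqf W_def A_def using ik ikg by simp
    ultimately have le: "(m powr p - p * m powr (p - 1) * m) * W + p * m powr (p - 1) * A \<le> (\<integral>t. k t * g t powr p \<partial>lborel)"
      by simp
    have mm: "m powr (p - 1) * m = m powr p" using m by (rule powr_pred_mult)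
    have AM: "A = m * M" unfolding m_def using M by simp
    have "(m powr p - p * m powr (p - 1) * m) * W + p * m powr (p - 1) * A = m powr p * (W + p * (M - W))"
      using mm AM by (simp add: algebra_simps)
    also have "\<dots> \<ge> m powr p * M"
    proof -
      have "M - W \<ge> 0" using W unfolding W_def by simp
      then have "p * (M - W) \<ge> 1 * (M - W)" using p by (intro mult_right_mono) auto
      then show ?thesis by (intro mult_left_mono) auto
    qed
    finally have key: "m powr p * M \<le> (\<integral>t. k t * g t powr p \<partial>lborel)" using le by linarith
    have "A powr p = m powr p * M powr p" unfolding AM using m M by (simp add: powr_mult)
    also have "\<dots> = M powr (p - 1) * (m powr p * M)"
    proof -
      have MM: "M powr (p - 1) * M = M powr p" using M by (rule powr_pred_mult)
      show ?thesis by (subst MM[symmetric]) (simp only: ac_simps)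
    qed
    also have "\<dots> \<le> M powr (p - 1) * (\<integral>t. k t * g t powr p \<partial>lborel)"
      using key by (intro mult_left_mono) auto
    finally show ?thesis unfolding A_def .
  qed
qed


locale R6 =
  fixes q :: "real \<Rightarrow> real" and a lam :: real
  assumes q_nonneg: "\<forall>x. q x \<ge> 0"
    and q_loc: "\<forall>s t. set_integrable lborel {s..t} q"
    and a_pos: "a > 0"
    and q_inf: "(INF x. (LINT t:{x-a..x+a}|lborel. q t)) > 0"
    and lam_pos: "lam > 0"
begin

definition G where "G x = (LBINT \<xi>=ereal 0..ereal x. q \<xi> + lam)"
definition Q where "Q x t = (LINT \<xi>:{x..t}|lborel. q \<xi>)"
definition c where "c = (INF x. (LINT t:{x-a..x+a}|lborel. q t))"

lemma c_pos: "c > 0" using q_inf by (simp add: c_def)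

lemma qlam_int: "set_integrable lborel {s..t} (\<lambda>\<xi>. q \<xi> + lam)"
proof -
  have "set_integrable lborel {s..t} (\<lambda>\<xi>. lam)"
    by (rule borel_integrable_atLeastAtMost') auto
  then show ?thesis using q_loc by auto
qed

lemma ili: "u \<le> v \<Longrightarrow> interval_lebesgue_integrable lborel (ereal u) (ereal v) (\<lambda>\<xi>. q \<xi> + lam)"
  unfolding interval_lebesgue_integrable_def
  by (auto intro: set_integrable_subset[OF qlam_int[of u v]])

lemma F1: assumes "x \<le> t" shows "(LINT \<xi>:{x..t}|lborel. q \<xi> + lam) = G t - G x"
proof -
  have m1: "min (ereal 0) (min (ereal x) (ereal t)) = ereal (min 0 (min x t))"
    by (simp add: min_def)
  have m2: "max (ereal 0) (max (ereal x) (ereal t)) = ereal (max 0 (max x t))"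
    by (simp add: max_def)
  have "(LBINT \<xi>=ereal 0..ereal x. q \<xi> + lam) + (LBINT \<xi>=ereal x..ereal t. q \<xi> + lam)
      = (LBINT \<xi>=ereal 0..ereal t. q \<xi> + lam)"
    by (rule interval_integral_sum) (simp only: m1 m2, rule ili, simp)
  moreover have "(LBINT \<xi>=ereal x..ereal t. q \<xi> + lam) = (LINT \<xi>:{x..t}|lborel. q \<xi> + lam)"
    using assms by (rule interval_integral_Icc)
  ultimately show ?thesis unfolding G_def by simp
qed

lemma G_diff: assumes "x \<le> t" shows "G t - G x = Q x t + lam * (t - x)"
proof -
  have "set_integrable lborel {x..t} (\<lambda>\<xi>. lam)"
    by (rule borel_integrable_atLeastAtMost') auto
  then have "(LINT \<xi>:{x..t}|lborel. q \<xi> + lam) = Q x t + (LINT \<xi>:{x..t}|lborel. lam)"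
    using q_loc unfolding Q_def by (subst set_integral_add(2)) auto
  also have "(LINT \<xi>:{x..t}|lborel. lam) = lam * (t - x)"
    using assms by (subst set_integral_const) auto
  finally show ?thesis using F1[OF assms] by simp
qed

lemma Q_nonneg: "Q x t \<ge> 0"
  unfolding Q_def set_lebesgue_integral_def using q_nonneg
  by (intro Bochner_Integration.integral_nonneg) (auto simp: indicator_def)

lemma Q_split: assumes "x \<le> s" "s \<le> t" shows "Q x t = Q x s + Q s t"
  using G_diff[of x s] G_diff[of s t] G_diff[of x t] assms by (simp add: algebra_simps)

lemma Q_c: "Q x (x + 2 * a) \<ge> c"
proof -
  have "c \<le> (LINT t:{(x+a)-a..(x+a)+a}|lborel. q t)"
    unfolding c_def
  proof (rule cINF_lower)
    show "bdd_below (range (\<lambda>x. LINT t:{x - a..x + a}|lborel. q t))"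
      using Q_nonneg unfolding Q_def by (intro bdd_belowI[where m=0]) auto
  qed simp
  also have "{(x+a)-a..(x+a)+a} = {x..x+2*a}" by auto
  finally show ?thesis unfolding Q_def .
qed

lemma G_mono: assumes "x \<le> t" shows "G x \<le> G t"
proof -
  have "lam * (t - x) \<ge> 0" using assms lam_pos by simp
  then show ?thesis using G_diff[OF assms] Q_nonneg[of x t] by linarith
qed

lemma G_bound: assumes "x \<le> t"
  shows "G t - G x \<ge> lam * (t - x) + (if 2 * a \<le> t - x then c else 0)"
proof (cases "2 * a \<le> t - x")
  case True
  have "Q x t = Q x (x + 2*a) + Q (x + 2*a) t" using a_pos True by (intro Q_split) auto
  then have "Q x t \<ge> c" using Q_c[of x] Q_nonneg[of "x+2*a" t] by simp
  then show ?thesis using G_diff[OF assms] True by simp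
next
  case False
  then show ?thesis using G_diff[OF assms] Q_nonneg[of x t] by simp
qed

lemma G_isCont: "isCont G x0"
proof -
  define g where "g t = indicator {x0-1..x0+1} t * (q t + lam)" for t
  have gi: "integrable lborel g"
    using qlam_int[of "x0-1" "x0+1"] unfolding g_def set_integrable_def by simp
  have ev: "eventually (\<lambda>x. x \<in> {x0-1<..<x0+1}) (nhds x0)"
    by (rule eventually_nhds_in_open) auto
  have "eventually (\<lambda>x. G x = G (x0-1) + (\<integral>t. indicator {..x} t * g t \<partial>lborel)) (nhds x0)"
    using ev
  proof eventually_elim
    case (elim x)
    then have "G x - G (x0-1) = (LINT \<xi>:{x0-1..x}|lborel. q \<xi> + lam)"
      using F1[of "x0-1" x] by simp
    also have "\<dots> = (\<integral>t. indicator {..x} t * g t \<partial>lborel)"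
      unfolding set_lebesgue_integral_def g_def
      using elim by (intro Bochner_Integration.integral_cong) (auto simp: indicator_def)
    finally show ?case by simp
  qed
  moreover have "isCont (\<lambda>x. G (x0-1) + (\<integral>t. indicator {..x} t * g t \<partial>lborel)) x0"
    using cont_Iic[OF gi, of x0] by (intro continuous_intros) auto
  ultimately show ?thesis by (subst isCont_cong) auto
qed

lemma G_cont: "continuous_on UNIV G"
  using G_isCont by (simp add: continuous_on_eq_continuous_at)

lemma G_meas[measurable]: "G \<in> borel_measurable borel"
  using G_cont by (rule borel_measurable_continuous_onI)

definition kt where
  "kt s = indicator {0..} s * exp (- (lam * s)) - (1 - exp (- c)) * (indicator {2*a..} s * exp (- (lam * s)))"

definition M where "M = 1 / lam - (1 - exp (- c)) * (exp (- (lam * (2 * a))) / lam)"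

lemma kt_int: "integrable lborel kt"
  unfolding kt_def using exp_Ici(1)[OF lam_pos, of 0] exp_Ici(1)[OF lam_pos, of "2*a"] by auto

lemma kt_integral: "(\<integral>s. kt s \<partial>lborel) = M"
  unfolding kt_def M_def using exp_Ici[OF lam_pos, of 0] exp_Ici[OF lam_pos, of "2*a"] by simp

lemma M_pos: "M > 0"
proof -
  have "(1 - exp (- c)) * exp (- (lam * (2 * a))) < 1 * 1"
    using c_pos a_pos lam_pos by (intro mult_strict_mono) auto
  then have "0 < (1 - (1 - exp (- c)) * exp (- (lam * (2 * a)))) / lam" using lam_pos by simp
  also have "\<dots> = M" unfolding M_def using lam_pos by (simp add: field_simps)
  finally show ?thesis .
qed

lemma M_lt: "M < 1 / lam"
proof -
  have "0 < (1 - exp (- c)) * (exp (- (lam * (2 * a))) / lam)"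
    using c_pos lam_pos by (intro mult_pos_pos) auto
  then show ?thesis unfolding M_def by simp
qed

definition K where "K x t = (if x \<le> t then exp (G x - G t) else 0)"

lemma K_meas[measurable]: "(\<lambda>(x, t). K x t) \<in> borel_measurable (lborel \<Otimes>\<^sub>M lborel)"
  unfolding K_def by measurable

lemma K_nonneg: "K x t \<ge> 0" by (simp add: K_def)

lemma K_le1: "K x t \<le> 1" using G_mono[of x t] by (simp add: K_def)

lemma K_le: "K x t \<le> kt (t - x)"
proof (cases "x \<le> t")
  case True
  have "G x - G t \<le> - (lam * (t - x)) + (if 2 * a \<le> t - x then - c else 0)"
    using G_bound[OF True] by auto
  then have "K x t \<le> exp (- (lam * (t - x)) + (if 2 * a \<le> t - x then - c else 0))"
    using True by (simp add: K_def)
  also have "\<dots> = kt (t - x)"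
  proof (cases "2 * a \<le> t - x")
    case True2: True
    have "exp (- (lam * (t - x)) + - c) = exp (- (lam * (t - x))) * exp (- c)" by (rule exp_add)
    then show ?thesis using True True2 by (simp add: kt_def algebra_simps)
  next
    case False
    then show ?thesis using True by (simp add: kt_def)
  qed
  finally show ?thesis .
next
  case False
  then show ?thesis using a_pos by (simp add: K_def kt_def)
qed

lemma kt_row: "integrable lborel (\<lambda>t. kt (t - x))" "(\<integral>t. kt (t - x) \<partial>lborel) = M"
proof -
  have e: "(\<lambda>y. kt (- x + 1 * y)) = (\<lambda>t. kt (t - x))" by (rule ext) (simp add: algebra_simps)
  show "integrable lborel (\<lambda>t. kt (t - x))"
    using lborel_integrable_real_affine[OF kt_int, of 1 "-x"] by (simp only: e)
  show "(\<integral>t. kt (t - x) \<partial>lborel) = M"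
    using lborel_integral_real_affine[of 1 kt "-x"] kt_integral by (simp only: e) simp
qed

lemma kt_col: "integrable lborel (\<lambda>x. kt (t - x))" "(\<integral>x. kt (t - x) \<partial>lborel) = M"
proof -
  have e: "(\<lambda>y. kt (t + (-1) * y)) = (\<lambda>x. kt (t - x))" by (rule ext) (simp add: algebra_simps)
  show "integrable lborel (\<lambda>x. kt (t - x))"
    using lborel_integrable_real_affine[OF kt_int, of "-1" t] by (simp only: e)
  show "(\<integral>x. kt (t - x) \<partial>lborel) = M"
    using lborel_integral_real_affine[of "-1" kt t] kt_integral by (simp only: e) simp
qed

lemma kt_nonneg: "kt s \<ge> 0"
  using K_le[of 0 s] K_nonneg[of 0 s] by simp

lemma K_meas1[measurable]: "K x \<in> borel_measurable lborel"
  unfolding K_def by measurable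

lemma K_int: "integrable lborel (K x)"
proof (rule Bochner_Integration.integrable_bound[OF kt_row(1)[of x]])
  show "AE t in lborel. norm (K x t) \<le> norm (kt (t - x))"
  proof (rule AE_I2)
    fix t
    show "norm (K x t) \<le> norm (kt (t - x))"
      using K_le[of x t] K_nonneg[of x t] kt_nonneg[of "t - x"] by simp
  qed
qed measurable

lemma K_row: "(\<integral>t. K x t \<partial>lborel) \<le> M"
proof -
  have "(\<integral>t. K x t \<partial>lborel) \<le> (\<integral>t. kt (t - x) \<partial>lborel)"
    using K_int kt_row(1) K_le by (intro integral_mono) auto
  then show ?thesis using kt_row(2) by simp
qed

lemma K_col: "(\<integral>\<^sup>+x. ennreal (K x t) \<partial>lborel) \<le> ennreal M"
proof -
  have "(\<integral>\<^sup>+x. ennreal (K x t) \<partial>lborel) \<le> (\<integral>\<^sup>+x. ennreal (kt (t - x)) \<partial>lborel)"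
    by (intro nn_integral_mono ennreal_leI K_le)
  also have "\<dots> = ennreal (\<integral>x. kt (t - x) \<partial>lborel)"
    using kt_col(1) kt_nonneg by (intro nn_integral_eq_integral) auto
  finally show ?thesis using kt_col(2) by simp
qed

lemma resolv_eq: "resolv q lam f x = (\<integral>t. K x t * f t \<partial>lborel)"
proof -
  have eq: "indicator {x..} t *\<^sub>R (exp (- (LINT \<xi>:{x..t}|lborel. q \<xi> + lam)) * f t) = K x t * f t" for t
  proof (cases "x \<le> t")
    case True
    then show ?thesis using F1[OF True] by (simp add: K_def)
  next
    case False
    then show ?thesis by (simp add: K_def)
  qed
  show ?thesis unfolding resolv_def set_lebesgue_integral_def[of lborel "{x..}"]
    by (intro Bochner_Integration.integral_cong refl eq)
qed

lemma le_one_plus_powr: fixes y p :: real assumes y: "y \<ge> 0" and p: "p \<ge> 1" shows "y \<le> 1 + y powr p"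
proof (cases "y \<le> 1")
  case True
  have "0 \<le> y powr p" by simp
  then show ?thesis using True by linarith
next
  case False
  then have "y powr 1 \<le> y powr p" using p by (intro powr_mono) auto
  moreover have "y powr 1 = y" using y by simp
  moreover have "0 \<le> y powr p" by simp
  ultimately show ?thesis by linarith
qed

lemma Lp_part:
  assumes p: "p \<ge> 1" and f: "in_Lp p f"
  shows "in_Lp p (resolv q lam f) \<and> Lp_norm p (resolv q lam f) \<le> M * Lp_norm p f"
proof -
  have fm[measurable]: "f \<in> borel_measurable lborel" and fi: "integrable lborel (\<lambda>x. \<bar>f x\<bar> powr p)"
    using f unfolding in_Lp_def by auto
  define R where "R x = (\<integral>t. K x t * f t \<partial>lborel)" for x
  have Req: "resolv q lam f = R" by (rule ext) (simp add: resolv_eq R_def)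
  have Rm[measurable]: "R \<in> borel_measurable lborel" unfolding R_def by measurable
  have iKfp: "integrable lborel (\<lambda>t. K x t * \<bar>f t\<bar> powr p)" for x
  proof (rule Bochner_Integration.integrable_bound[OF fi])
    show "AE t in lborel. norm (K x t * \<bar>f t\<bar> powr p) \<le> norm (\<bar>f t\<bar> powr p)"
      using K_nonneg K_le1 by (intro AE_I2) (auto simp: abs_mult intro!: mult_left_le_one_le)
  qed measurable
  have iKf: "integrable lborel (\<lambda>t. K x t * \<bar>f t\<bar>)" for x
  proof (rule Bochner_Integration.integrable_bound[OF Bochner_Integration.integrable_add[OF kt_row(1)[of x] fi]])
    show "AE t in lborel. norm (K x t * \<bar>f t\<bar>) \<le> norm (kt (t - x) + \<bar>f t\<bar> powr p)"
    proof (intro AE_I2)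
      fix t
      have "K x t * \<bar>f t\<bar> \<le> K x t * (1 + \<bar>f t\<bar> powr p)"
        using le_one_plus_powr[of "\<bar>f t\<bar>" p] p K_nonneg[of x t] by (intro mult_left_mono) auto
      also have "\<dots> = K x t + K x t * \<bar>f t\<bar> powr p" by (simp add: algebra_simps)
      also have "\<dots> \<le> kt (t - x) + \<bar>f t\<bar> powr p"
        using K_le[of x t] K_le1[of x t] by (intro add_mono mult_left_le_one_le) (auto simp: K_nonneg)
      finally show "norm (K x t * \<bar>f t\<bar>) \<le> norm (kt (t - x) + \<bar>f t\<bar> powr p)"
        using K_nonneg[of x t] kt_nonneg[of "t - x"] by (simp add: abs_mult)
    qed
  qed measurable
  have pw: "\<bar>R x\<bar> powr p \<le> M powr (p - 1) * (\<integral>t. K x t * \<bar>f t\<bar> powr p \<partial>lborel)" for x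
  proof -
    have "\<bar>R x\<bar> \<le> (\<integral>t. norm (K x t * f t) \<partial>lborel)"
      unfolding R_def using integral_norm_bound[of lborel "\<lambda>t. K x t * f t"] by simp
    also have "\<dots> = (\<integral>t. K x t * \<bar>f t\<bar> \<partial>lborel)"
      using K_nonneg by (simp add: abs_mult)
    finally have "\<bar>R x\<bar> powr p \<le> (\<integral>t. K x t * \<bar>f t\<bar> \<partial>lborel) powr p"
      using p by (intro powr_mono2) auto
    also have "\<dots> \<le> M powr (p - 1) * (\<integral>t. K x t * \<bar>f t\<bar> powr p \<partial>lborel)"
      by (rule jensen_pw[OF K_nonneg _ K_int iKf iKfp K_row M_pos p]) simp
    finally show ?thesis .
  qed
  have "(\<integral>\<^sup>+x. ennreal (\<bar>R x\<bar> powr p) \<partial>lborel)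
      \<le> (\<integral>\<^sup>+x. ennreal (M powr (p - 1) * (\<integral>t. K x t * \<bar>f t\<bar> powr p \<partial>lborel)) \<partial>lborel)"
    by (intro nn_integral_mono ennreal_leI pw)
  also have "\<dots> = (\<integral>\<^sup>+x. ennreal (M powr (p - 1)) * (\<integral>\<^sup>+t. ennreal (K x t * \<bar>f t\<bar> powr p) \<partial>lborel) \<partial>lborel)"
  proof (intro nn_integral_cong)
    fix x
    have "ennreal (\<integral>t. K x t * \<bar>f t\<bar> powr p \<partial>lborel) = (\<integral>\<^sup>+t. ennreal (K x t * \<bar>f t\<bar> powr p) \<partial>lborel)"
      using iKfp K_nonneg by (intro nn_integral_eq_integral[symmetric]) auto
    then show "ennreal (M powr (p - 1) * (\<integral>t. K x t * \<bar>f t\<bar> powr p \<partial>lborel))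
        = ennreal (M powr (p - 1)) * (\<integral>\<^sup>+t. ennreal (K x t * \<bar>f t\<bar> powr p) \<partial>lborel)"
      using K_nonneg by (simp add: ennreal_mult)
  qed
  also have "\<dots> = ennreal (M powr (p - 1)) * (\<integral>\<^sup>+x. (\<integral>\<^sup>+t. ennreal (K x t * \<bar>f t\<bar> powr p) \<partial>lborel) \<partial>lborel)"
    by (rule nn_integral_cmult) measurable
  also have "(\<integral>\<^sup>+x. (\<integral>\<^sup>+t. ennreal (K x t * \<bar>f t\<bar> powr p) \<partial>lborel) \<partial>lborel)
      = (\<integral>\<^sup>+t. (\<integral>\<^sup>+x. ennreal (K x t * \<bar>f t\<bar> powr p) \<partial>lborel) \<partial>lborel)"
    by (rule lborel_pair.Fubini'[symmetric]) measurable
  also have "\<dots> = (\<integral>\<^sup>+t. ennreal (\<bar>f t\<bar> powr p) * (\<integral>\<^sup>+x. ennreal (K x t) \<partial>lborel) \<partial>lborel)"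
  proof (intro nn_integral_cong)
    fix t
    have "(\<integral>\<^sup>+x. ennreal (K x t * \<bar>f t\<bar> powr p) \<partial>lborel) = (\<integral>\<^sup>+x. ennreal (K x t) * ennreal (\<bar>f t\<bar> powr p) \<partial>lborel)"
      using K_nonneg by (simp add: ennreal_mult)
    also have "\<dots> = (\<integral>\<^sup>+x. ennreal (K x t) \<partial>lborel) * ennreal (\<bar>f t\<bar> powr p)"
      by (rule nn_integral_multc) measurable
    finally show "(\<integral>\<^sup>+x. ennreal (K x t * \<bar>f t\<bar> powr p) \<partial>lborel) = ennreal (\<bar>f t\<bar> powr p) * (\<integral>\<^sup>+x. ennreal (K x t) \<partial>lborel)"
      by (simp add: mult.commute)
  qed
  also have "\<dots> \<le> (\<integral>\<^sup>+t. ennreal (\<bar>f t\<bar> powr p) * ennreal M \<partial>lborel)"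
    by (intro nn_integral_mono mult_left_mono K_col) auto
  also have "\<dots> = (\<integral>\<^sup>+t. ennreal (\<bar>f t\<bar> powr p) \<partial>lborel) * ennreal M"
    by (rule nn_integral_multc) measurable
  also have "(\<integral>\<^sup>+t. ennreal (\<bar>f t\<bar> powr p) \<partial>lborel) = ennreal (\<integral>t. \<bar>f t\<bar> powr p \<partial>lborel)"
    using fi by (intro nn_integral_eq_integral) auto
  finally have nn0: "(\<integral>\<^sup>+x. ennreal (\<bar>R x\<bar> powr p) \<partial>lborel)
      \<le> ennreal (M powr (p - 1)) * (ennreal (\<integral>t. \<bar>f t\<bar> powr p \<partial>lborel) * ennreal M)"
    by (simp add: mult_left_mono)
  have "ennreal (M powr (p - 1)) * (ennreal (\<integral>t. \<bar>f t\<bar> powr p \<partial>lborel) * ennreal M)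
      = ennreal (M powr (p - 1) * ((\<integral>t. \<bar>f t\<bar> powr p \<partial>lborel) * M))"
    using M_pos by (simp add: ennreal_mult)
  with nn0 have nn: "(\<integral>\<^sup>+x. ennreal (\<bar>R x\<bar> powr p) \<partial>lborel)
      \<le> ennreal (M powr (p - 1) * ((\<integral>t. \<bar>f t\<bar> powr p \<partial>lborel) * M))" by simp
  have Ri: "integrable lborel (\<lambda>x. \<bar>R x\<bar> powr p)"
  proof (rule integrableI_bounded)
    show "(\<integral>\<^sup>+x. ennreal (norm (\<bar>R x\<bar> powr p)) \<partial>lborel) < \<infinity>"
      using nn by (simp add: le_less_trans)
  qed measurable
  define I where "I = (\<integral>t. \<bar>f t\<bar> powr p \<partial>lborel)"
  have I0: "I \<ge> 0" unfolding I_def by simp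
  have "ennreal (\<integral>x. \<bar>R x\<bar> powr p \<partial>lborel) = (\<integral>\<^sup>+x. ennreal (\<bar>R x\<bar> powr p) \<partial>lborel)"
    using Ri by (intro nn_integral_eq_integral[symmetric]) auto
  with nn have E: "ennreal (\<integral>x. \<bar>R x\<bar> powr p \<partial>lborel) \<le> ennreal (M powr (p - 1) * (I * M))"
    unfolding I_def by simp
  have "(\<integral>x. \<bar>R x\<bar> powr p \<partial>lborel) \<le> M powr (p - 1) * (I * M)"
    using E I0 M_pos by (subst (asm) ennreal_le_iff) auto
  also have "\<dots> = M powr p * I"
  proof -
    have MM: "M powr (p - 1) * M = M powr p" using M_pos by (rule powr_pred_mult)
    show ?thesis by (subst MM[symmetric]) (simp only: ac_simps)
  qed
  finally have RI: "(\<integral>x. \<bar>R x\<bar> powr p \<partial>lborel) \<le> M powr p * I" .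
  have "Lp_norm p R = (\<integral>x. \<bar>R x\<bar> powr p \<partial>lborel) powr (1 / p)" unfolding Lp_norm_def ..
  also have "\<dots> \<le> (M powr p * I) powr (1 / p)"
    using RI p by (intro powr_mono2) auto
  also have "\<dots> = M * I powr (1 / p)"
    using M_pos I0 p by (simp add: powr_mult powr_powr)
  also have "\<dots> = M * Lp_norm p f" unfolding Lp_norm_def I_def ..
  finally show ?thesis using Ri Req unfolding in_Lp_def by simp
qed

lemma Cb_part:
  assumes f: "in_Cb f"
  shows "in_Cb (resolv q lam f) \<and> sup_norm (resolv q lam f) \<le> M * sup_norm f"
proof -
  have fc: "continuous_on UNIV f" and fb: "bounded (range f)" using f unfolding in_Cb_def by auto
  have fm[measurable]: "f \<in> borel_measurable borel" using fc by (rule borel_measurable_continuous_onI)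
  obtain B where B: "\<And>x. \<bar>f x\<bar> \<le> B" using fb unfolding bounded_iff by auto
  define S where "S = sup_norm f"
  have fS: "\<bar>f t\<bar> \<le> S" for t
    unfolding S_def sup_norm_def using B by (intro cSUP_upper bdd_aboveI2) auto
  have S0: "S \<ge> 0" using fS[of 0] by simp
  have iKf: "integrable lborel (\<lambda>t. K x t * f t)" for x
  proof (rule Bochner_Integration.integrable_bound[OF integrable_mult_right[OF kt_row(1)[of x], of S]])
    show "AE t in lborel. norm (K x t * f t) \<le> norm (S * kt (t - x))"
    proof (intro AE_I2)
      fix t
      have "\<bar>K x t * f t\<bar> = K x t * \<bar>f t\<bar>" using K_nonneg by (simp add: abs_mult)
      also have "\<dots> \<le> kt (t - x) * S" using K_le[of x t] fS[of t] K_nonneg[of x t] S0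
        by (intro mult_mono) auto
      finally show "norm (K x t * f t) \<le> norm (S * kt (t - x))"
        using S0 kt_nonneg[of "t - x"] by (simp add: abs_mult mult.commute)
    qed
  qed measurable
  define R where "R x = (\<integral>t. K x t * f t \<partial>lborel)" for x
  have Req: "resolv q lam f = R" by (rule ext) (simp add: resolv_eq R_def)
  have Rb: "\<bar>R x\<bar> \<le> M * S" for x
  proof -
    have "\<bar>R x\<bar> \<le> (\<integral>t. norm (K x t * f t) \<partial>lborel)"
      unfolding R_def using integral_norm_bound[of lborel "\<lambda>t. K x t * f t"] by simp
    also have "\<dots> \<le> (\<integral>t. S * K x t \<partial>lborel)"
    proof (rule integral_mono)
      show "integrable lborel (\<lambda>t. norm (K x t * f t))" using iKf by auto
      show "integrable lborel (\<lambda>t. S * K x t)" using K_int by auto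
      show "norm (K x t * f t) \<le> S * K x t" for t
        using mult_right_mono[OF fS[of t] K_nonneg[of x t]] K_nonneg[of x t] by (simp add: abs_mult mult.commute)
    qed
    also have "\<dots> = S * (\<integral>t. K x t \<partial>lborel)" by simp
    also have "\<dots> \<le> S * M" using K_row S0 by (intro mult_left_mono) auto
    finally show ?thesis by (simp add: mult.commute)
  qed
  have sup: "sup_norm R \<le> M * S"
    unfolding sup_norm_def by (intro cSUP_least Rb) auto
  have bR: "bounded (range R)"
    unfolding bounded_iff using Rb by auto
  have cR: "isCont R x0" for x0
  proof -
    define h0 where "h0 t = exp (- G (x0 - 1)) * (K (x0 - 1) t * f t)" for t
    have ih0: "integrable lborel h0" unfolding h0_def using iKf by auto
    have ev: "eventually (\<lambda>x. x \<in> {x0-1<..}) (nhds x0)"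
      by (rule eventually_nhds_in_open) auto
    have "eventually (\<lambda>x. R x = exp (G x) * (\<integral>t. indicator {x..} t * h0 t \<partial>lborel)) (nhds x0)"
      using ev
    proof eventually_elim
      case (elim x)
      have eq: "K x t * f t = exp (G x) * (indicator {x..} t * h0 t)" for t
      proof (cases "x \<le> t")
        case True
        then have "x0 - 1 \<le> t" using elim by simp
        have e1: "exp (- G (x0 - 1)) * exp (G (x0 - 1) - G t) = exp (- G t)"
          by (simp add: mult_exp_exp)
        have e2: "exp (G x - G t) = exp (G x) * exp (- G t)"
          by (simp add: mult_exp_exp)
        have "K x t * f t = exp (G x) * exp (- G t) * f t"
          using True by (simp only: K_def e2 if_True)
        also have "\<dots> = exp (G x) * (exp (- G (x0 - 1)) * exp (G (x0 - 1) - G t) * f t)"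
          by (simp only: e1 mult.assoc)
        also have "\<dots> = exp (G x) * (indicator {x..} t * h0 t)"
          using True \<open>x0 - 1 \<le> t\<close> by (simp add: h0_def K_def mult.assoc)
        finally show ?thesis .
      next
        case False
        then show ?thesis by (simp add: K_def)
      qed
      have "R x = (\<integral>t. exp (G x) * (indicator {x..} t * h0 t) \<partial>lborel)"
        unfolding R_def by (intro Bochner_Integration.integral_cong refl eq)
      then show ?case by simp
    qed
    moreover have "isCont (\<lambda>x. exp (G x) * (\<integral>t. indicator {x..} t * h0 t \<partial>lborel)) x0"
      using G_isCont[of x0] cont_Ici[OF ih0, of x0] by (intro continuous_intros) auto
    ultimately show ?thesis by (subst isCont_cong) auto
  qed
  have "continuous_on UNIV R" using cR by (simp add: continuous_on_eq_continuous_at)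
  then show ?thesis using bR sup Req unfolding in_Cb_def S_def by simp
qed

end

theorem lemma6p2:
  fixes q :: "real \<Rightarrow> real" and a lam :: real
  assumes q_nonneg: "\<forall>x. q x \<ge> 0"
    and q_loc: "\<forall>s t. set_integrable lborel {s..t} q"
    and a_pos: "a > 0"
    and q_inf: "(INF x. (LINT t:{x-a..x+a}|lborel. q t)) > 0"
    and lam_pos: "lam > 0"
  shows "\<exists>\<delta>>0.
     (\<forall>p\<ge>1. \<forall>f. in_Lp p f \<longrightarrow>
         in_Lp p (resolv q lam f) \<and> Lp_norm p (resolv q lam f) \<le> Lp_norm p f / (lam + \<delta>))
   \<and> (\<forall>f. in_Cb f \<longrightarrow>
         in_Cb (resolv q lam f) \<and> sup_norm (resolv q lam f) \<le> sup_norm f / (lam + \<delta>))"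
proof -
  interpret R6 q a lam using assms by unfold_locales
  define \<delta> where "\<delta> = 1 / M - lam"
  have "M * lam < 1" using M_lt lam_pos by (simp add: less_divide_eq)
  then have "lam < 1 / M" using M_pos by (simp add: less_divide_eq mult.commute)
  then have d: "\<delta> > 0" unfolding \<delta>_def by simp
  have ld: "lam + \<delta> = 1 / M" unfolding \<delta>_def by simp
  have div: "x / (lam + \<delta>) = M * x" for x unfolding ld by simp
  have A: "\<forall>p\<ge>1. \<forall>f. in_Lp p f \<longrightarrow>
         in_Lp p (resolv q lam f) \<and> Lp_norm p (resolv q lam f) \<le> Lp_norm p f / (lam + \<delta>)"
  proof (intro allI impI)
    fix p :: real and f :: "real \<Rightarrow> real"
    assume "p \<ge> 1" "in_Lp p f"
    from Lp_part[OF this] show "in_Lp p (resolv q lam f) \<and> Lp_norm p (resolv q lam f) \<le> Lp_norm p f / (lam + \<delta>)"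
      by (simp only: div)
  qed
  have B: "\<forall>f. in_Cb f \<longrightarrow>
         in_Cb (resolv q lam f) \<and> sup_norm (resolv q lam f) \<le> sup_norm f / (lam + \<delta>)"
  proof (intro allI impI)
    fix f :: "real \<Rightarrow> real"
    assume "in_Cb f"
    from Cb_part[OF this] show "in_Cb (resolv q lam f) \<and> sup_norm (resolv q lam f) \<le> sup_norm f / (lam + \<delta>)"
      by (simp only: div)
  qed
  show ?thesis by (rule exI[of _ \<delta>]) (intro conjI d A B)
qed

end
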